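(* Let $E$ be a Hausdorff locally convex topological vector space, $\Omega$ an open subset of $E$, and $(Y,\|\cdot\|)$ a normed space. Let $g:\Omega\to Y$ be Gateaux differentiable and continuous at $\hat{x}\in\Omega$. Let $C$ be a family of functions from $Y$ into $\mathbb{R}$ which is $r$-equi-Lipschitz at $g(\hat{x})$ for some $r\ge0$ and equi-Gateaux differentiable at $g(\hat{x})$. Then (i) $\overline{\operatorname{conv}}^{w^*}\{d_G\phi(g(\hat{x})):\phi\in C\}$ is a $w^*$-compact subset of $Y^*$; (ii) the family $\{\phi\circ g:\phi\in C\}$ is equi-Gateaux differentiable at $\hat{x}$ and $d_G(\phi\circ g)(\hat{x})=d_G\phi(g(\hat{x}))\circ d_G g(\hat{x})$ for all $\phi\in C$.
   Context: A map $g$ into a normed space is Gateaux differentiable at $x$ if there is a continuous linear map $d_Gg(x)$ with $\lim_{t\searrow 0}\|(g(x+tv)-g(x)-t\,d_Gg(x)(v))/t\|=0$ for every $v$. A family $C$ of real functions is equi-Gateaux differentiable at $y$ if each $\phi\in C$ is Gateaux differentiable at $y$ and for every direction $v$, $\lim_{t\searrow0}\sup_{\phi\in C}|(\phi(y+tv)-\phi(y)-t\langle d_G\phi(y),v\rangle)/t|=0$. $C$ is $r$-equi-Lipschitz at $y$ if there is a ball centered at $y$ on which every $\phi\in C$ is $r$-Lipschitz. $\overline{\operatorname{conv}}^{w^*}$ denotes weak-star closed convex hull in $Y^*$. *)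

theory Defs
  imports "HOL-Analysis.Analysis"
begin

definition hlctvs :: "'a::{real_vector,t2_space} itself \<Rightarrow> bool" where
  "hlctvs _ \<longleftrightarrow>
     continuous_on UNIV (\<lambda>p::'a \<times> 'a. fst p + snd p) \<and>
     continuous_on UNIV (\<lambda>p::real \<times> 'a. fst p *\<^sub>R snd p) \<and>
     (\<forall>U. open U \<and> (0::'a) \<in> U \<longrightarrow> (\<exists>V. open V \<and> convex V \<and> 0 \<in> V \<and> V \<subseteq> U))"

definition gateaux_deriv ::
  "('a::{real_vector,topological_space} \<Rightarrow> 'b::real_normed_vector) \<Rightarrow> 'a \<Rightarrow> ('a \<Rightarrow> 'b) \<Rightarrow> bool" where
  "gateaux_deriv g x L \<longleftrightarrow> linear L \<and> continuous_on UNIV L \<and>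
     (\<forall>v. ((\<lambda>t. norm ((g (x + t *\<^sub>R v) - g x - t *\<^sub>R L v) /\<^sub>R t)) \<longlongrightarrow> 0) (at_right 0))"

definition gateaux_differentiable ::
  "('a::{real_vector,topological_space} \<Rightarrow> 'b::real_normed_vector) \<Rightarrow> 'a \<Rightarrow> bool" where
  "gateaux_differentiable g x \<longleftrightarrow> (\<exists>L. gateaux_deriv g x L)"

text \<open>The Gateaux derivative d_G g(x) (unique when it exists, since the codomain is Hausdorff).\<close>
definition gderiv ::
  "('a::{real_vector,topological_space} \<Rightarrow> 'b::real_normed_vector) \<Rightarrow> 'a \<Rightarrow> ('a \<Rightarrow> 'b)" where
  "gderiv g x = (SOME L. gateaux_deriv g x L)"

text \<open>Equi-Gateaux differentiability of a family of real functions at y. The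
  condition lim_{t\<searrow>0} sup_{phi\<in>C} |...| = 0 is written out in epsilon form.\<close>
definition equi_gateaux ::
  "('a::{real_vector,topological_space} \<Rightarrow> real) set \<Rightarrow> 'a \<Rightarrow> bool" where
  "equi_gateaux C y \<longleftrightarrow> (\<forall>\<phi>\<in>C. gateaux_differentiable \<phi> y) \<and>
     (\<forall>v. \<forall>\<epsilon>>0. \<forall>\<^sub>F t in at_right 0. \<forall>\<phi>\<in>C.
        \<bar>(\<phi> (y + t *\<^sub>R v) - \<phi> y - t * gderiv \<phi> y v) / t\<bar> \<le> \<epsilon>)"

definition equi_lipschitz_at :: "real \<Rightarrow> ('b::metric_space \<Rightarrow> real) set \<Rightarrow> 'b \<Rightarrow> bool" where
  "equi_lipschitz_at r C y \<longleftrightarrow> (\<exists>\<delta>>0. \<forall>\<phi>\<in>C. lipschitz_on r (ball y \<delta>) \<phi>)"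

text \<open>The weak-star topology on the dual Y* = of continuous linear functionals: the coarsest topology making
  all evaluations f \<mapsto> f y continuous, i.e. the pullback of the product topology.\<close>
definition weak_star :: "('b::real_normed_vector \<Rightarrow>\<^sub>L real) topology" where
  "weak_star = pullback_topology UNIV blinfun_apply (product_topology (\<lambda>_. euclideanreal) UNIV)"

definition wstar_closed_conv :: "('b::real_normed_vector \<Rightarrow>\<^sub>L real) set \<Rightarrow> ('b \<Rightarrow>\<^sub>L real) set" where
  "wstar_closed_conv S = weak_star closure_of (convex hull S)"

end

theory Submission
  imports Defs
begin


lemma topspace_weak_star[simp]: "topspace weak_star = UNIV"
  by (simp add: weak_star_def topspace_pullback_topology)

lemma cont_eval: "continuous_map (product_topology (\<lambda>_. euclideanreal) UNIV) euclideanreal (\<lambda>h. h y)"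
  by (rule continuous_map_product_projection) simp

lemma ball_compact:
  fixes r :: real assumes r: "r \<ge> 0"
  shows "compactin weak_star {f::'b::real_normed_vector \<Rightarrow>\<^sub>L real. \<forall>y. \<bar>f y\<bar> \<le> r * norm y}"
proof -
  let ?P = "product_topology (\<lambda>_::'b. euclideanreal) UNIV"
  define Q where "Q = {h::'b\<Rightarrow>real. linear h \<and> (\<forall>y. \<bar>h y\<bar> \<le> r * norm y)}"
  define Q1 where "Q1 = (\<Inter>y. {h \<in> topspace ?P. h y \<in> {-(r*norm y)..r*norm y}})"
  define Q2 where "Q2 = (\<Inter>(x,y)\<in>UNIV. {h \<in> topspace ?P. h (x+y) - h x - h y \<in> {0}})"
  define Q3 where "Q3 = (\<Inter>(c,x)\<in>UNIV. {h \<in> topspace ?P. h (c *\<^sub>R x) - c * h x \<in> {0}})"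
  have QQ: "Q = Q1 \<inter> Q2 \<inter> Q3"
    unfolding Q_def Q1_def Q2_def Q3_def linear_iff by (auto simp: abs_le_iff minus_le_iff algebra_simps)
  have cl: "closedin euclideanreal {a..b::real}" for a b by (simp add: closed_closedin[symmetric])
  have e: "closedin ?P {h \<in> topspace ?P. h y \<in> {a..b}}" for y a b
    by (rule closedin_continuous_map_preimage[OF cont_eval cl])
  have c1: "closedin ?P Q1" unfolding Q1_def
    by (intro closedin_Inter) (use e in blast)+
  have e2: "closedin ?P {h \<in> topspace ?P. h (x+y) - h x - h y \<in> {0}}" for x y
    by (rule closedin_continuous_map_preimage) (auto intro!: continuous_map_diff cont_eval simp: closed_closedin[symmetric])
  have e3: "closedin ?P {h \<in> topspace ?P. h (c *\<^sub>R x) - c * h x \<in> {0}}" for c x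
    by (rule closedin_continuous_map_preimage) (auto intro!: continuous_map_diff cont_eval continuous_map_real_mult_left simp: closed_closedin[symmetric])
  have c2: "closedin ?P Q2" unfolding Q2_def
    by (intro closedin_Inter) (use e2 in auto)
  have c3: "closedin ?P Q3" unfolding Q3_def
    by (intro closedin_Inter) (use e3 in auto)
  have cQ: "closedin ?P Q" unfolding QQ using c1 c2 c3 by blast
  have "compactin ?P (PiE UNIV (\<lambda>y. {-(r*norm y)..r*norm y}))"
    by (simp add: compactin_PiE)
  moreover have "Q \<subseteq> PiE UNIV (\<lambda>y. {-(r*norm y)..r*norm y})"
    unfolding Q_def by (auto simp: abs_le_iff minus_le_iff)
  ultimately have kQ: "compactin ?P Q" using cQ closed_compactin by blast
  then have kQ': "compactin (subtopology ?P Q) Q"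
    by (simp add: compactin_subtopology)
  have cm: "continuous_map (subtopology ?P Q) weak_star Blinfun"
    unfolding weak_star_def
  proof (rule continuous_map_pullback')
    show "continuous_map (subtopology ?P Q) ?P (blinfun_apply \<circ> Blinfun)"
    proof (rule continuous_map_eq[of _ _ id])
      show "continuous_map (subtopology ?P Q) ?P id"
        by (simp add: continuous_map_from_subtopology)
      fix h assume "h \<in> topspace (subtopology ?P Q)"
      then have "h \<in> Q" by simp
      then have "bounded_linear h" unfolding Q_def
        by (auto intro!: bounded_linear_intro[where K=r] simp: linear_iff abs_le_iff mult.commute)
      then show "id h = (blinfun_apply \<circ> Blinfun) h" by (simp add: bounded_linear_Blinfun_apply)
    qed
  qed simp
  have "compactin weak_star (Blinfun ` Q)" using image_compactin[OF kQ' cm] .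
  moreover have "Blinfun ` Q = {f::'b\<Rightarrow>\<^sub>L real. \<forall>y. \<bar>f y\<bar> \<le> r * norm y}"
  proof safe
    fix h y assume "h \<in> Q"
    then have "bounded_linear h" unfolding Q_def
      by (auto intro!: bounded_linear_intro[where K=r] simp: linear_iff abs_le_iff mult.commute)
    then show "\<bar>Blinfun h y\<bar> \<le> r * norm y" using \<open>h \<in> Q\<close> unfolding Q_def
      by (simp add: bounded_linear_Blinfun_apply)
  next
    fix f :: "'b \<Rightarrow>\<^sub>L real" assume "\<forall>y. \<bar>f y\<bar> \<le> r * norm y"
    then have "blinfun_apply f \<in> Q" unfolding Q_def
      using blinfun.bounded_linear_right bounded_linear.linear by blast
    then show "f \<in> Blinfun ` Q" by (metis blinfun_apply_inverse image_eqI)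
  qed
  ultimately show ?thesis by simp
qed

lemma ball_closed:
  "closedin weak_star {f::'b::real_normed_vector \<Rightarrow>\<^sub>L real. \<forall>y. \<bar>f y\<bar> \<le> r * norm y}"
proof -
  have "{f::'b \<Rightarrow>\<^sub>L real. \<forall>y. \<bar>f y\<bar> \<le> r * norm y} = (\<Inter>y. {f \<in> topspace weak_star. (\<lambda>h. h y) (blinfun_apply f) \<in> {-(r*norm y)..r*norm y}})"
    by (auto simp: abs_le_iff minus_le_iff)
  also have "closedin weak_star \<dots>"
  proof (intro closedin_Inter)
    fix S assume "S \<in> range (\<lambda>y. {f \<in> topspace weak_star. (\<lambda>h. h y) (blinfun_apply f) \<in> {-(r*norm y)..r*norm y}})"
    then obtain y where S: "S = {f \<in> topspace weak_star. (\<lambda>h. h y) (blinfun_apply f) \<in> {-(r*norm y)..r*norm y}}" by blast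
    have this_cm: "continuous_map weak_star euclideanreal ((\<lambda>h. h y) \<circ> blinfun_apply)"
      unfolding weak_star_def by (rule continuous_map_pullback) (rule cont_eval)
    have cl: "closedin euclideanreal {-(r*norm y)..r*norm y}" by (simp add: closed_closedin[symmetric])
    from closedin_continuous_map_preimage[OF this_cm cl]
    show "closedin weak_star S" unfolding S by simp
  qed simp
  finally show ?thesis .
qed



lemma gd_real: "gateaux_deriv (\<phi>::'c::{real_vector,topological_space} \<Rightarrow> real) y L \<longleftrightarrow> linear L \<and> continuous_on UNIV L \<and>
     (\<forall>v. ((\<lambda>t. \<bar>(\<phi> (y + t *\<^sub>R v) - \<phi> y - t * L v) / t\<bar>) \<longlongrightarrow> 0) (at_right 0))"
  unfolding gateaux_deriv_def by (simp add: divide_inverse mult.commute)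

lemma gateaux_unique:
  assumes "gateaux_deriv h x L1" "gateaux_deriv h x L2"
  shows "L1 = L2"
proof
  fix v
  let ?n = "\<lambda>L t. norm ((h (x + t *\<^sub>R v) - h x - t *\<^sub>R L v) /\<^sub>R t)"
  have t1: "(?n L1 \<longlongrightarrow> 0) (at_right 0)" "(?n L2 \<longlongrightarrow> 0) (at_right 0)"
    using assms unfolding gateaux_deriv_def by auto
  have "((\<lambda>t. ?n L1 t + ?n L2 t) \<longlongrightarrow> 0 + 0) (at_right 0)" by (intro tendsto_add t1)
  moreover have "\<forall>\<^sub>F t in at_right 0. norm (L1 v - L2 v) \<le> ?n L1 t + ?n L2 t"
    unfolding eventually_at_right_field
  proof (intro exI[of _ 1] conjI allI impI)
    fix t :: real assume "t > 0"
    have "L1 v - L2 v = (h (x + t *\<^sub>R v) - h x - t *\<^sub>R L2 v) /\<^sub>R t - (h (x + t *\<^sub>R v) - h x - t *\<^sub>R L1 v) /\<^sub>R t"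
      using \<open>t > 0\<close> by (simp add: algebra_simps)
    also have "norm \<dots> \<le> ?n L2 t + ?n L1 t" by (rule norm_triangle_ineq4)
    finally show "norm (L1 v - L2 v) \<le> ?n L1 t + ?n L2 t" by simp
  qed simp
  ultimately have "norm (L1 v - L2 v) \<le> 0"
    by (intro tendsto_le[OF trivial_limit_at_right_real _ tendsto_const]) auto
  then show "L1 v = L2 v" by simp
qed

lemma gderiv_eq: "gateaux_deriv h x L \<Longrightarrow> gderiv h x = L"
  unfolding gderiv_def by (metis someI gateaux_unique)

lemma gderiv_ok: "gateaux_differentiable h x \<Longrightarrow> gateaux_deriv h x (gderiv h x)"
  unfolding gderiv_def gateaux_differentiable_def by (metis someI)

lemma deriv_bound:
  assumes lip: "lipschitz_on r (ball y \<delta>) \<phi>" and d: "\<delta> > 0"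
    and g: "gateaux_deriv (\<phi>::'b::real_normed_vector \<Rightarrow> real) y L"
  shows "\<bar>L v\<bar> \<le> r * norm v"
proof -
  let ?n = "\<lambda>t. \<bar>(\<phi> (y + t *\<^sub>R v) - \<phi> y - t * L v) / t\<bar>"
  have t: "(?n \<longlongrightarrow> 0) (at_right 0)" using g unfolding gd_real by auto
  have r0: "r \<ge> 0" using lip by (simp add: lipschitz_on_def)
  have "\<forall>\<^sub>F t in at_right 0. \<bar>L v\<bar> \<le> r * norm v + ?n t"
    unfolding eventually_at_right_field
  proof (intro exI[of _ "\<delta> / (norm v + 1)"] conjI allI impI)
    show "0 < \<delta> / (norm v + 1)" using d norm_ge_zero[of v] by (intro divide_pos_pos) linarith+
    fix t :: real assume t0: "t > 0" and tl: "t < \<delta> / (norm v + 1)"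
    have "t * norm v \<le> t * (norm v + 1)" using t0 by simp
    also have "\<dots> < \<delta>" using tl norm_ge_zero[of v] by (simp add: pos_less_divide_eq add_nonneg_pos mult.commute)
    finally have "y + t *\<^sub>R v \<in> ball y \<delta>" using t0 by (simp add: dist_norm)
    moreover have "y \<in> ball y \<delta>" using d by simp
    ultimately have "dist (\<phi> (y + t *\<^sub>R v)) (\<phi> y) \<le> r * dist (y + t *\<^sub>R v) y"
      using lip by (simp add: lipschitz_on_def)
    then have l: "\<bar>\<phi> (y + t *\<^sub>R v) - \<phi> y\<bar> \<le> r * (t * norm v)"
      using t0 by (simp add: dist_norm dist_real_def)
    have "\<bar>L v\<bar> = \<bar>(\<phi> (y + t *\<^sub>R v) - \<phi> y) / t - (\<phi> (y + t *\<^sub>R v) - \<phi> y - t * L v) / t\<bar>"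
      using t0 by (simp add: field_simps)
    also have "\<dots> \<le> \<bar>(\<phi> (y + t *\<^sub>R v) - \<phi> y) / t\<bar> + ?n t" by (rule abs_triangle_ineq4)
    also have "\<bar>(\<phi> (y + t *\<^sub>R v) - \<phi> y) / t\<bar> \<le> r * norm v"
      using l t0 by (simp add: abs_divide field_simps)
    finally show "\<bar>L v\<bar> \<le> r * norm v + ?n t" by simp
  qed
  moreover have "((\<lambda>t. r * norm v + ?n t) \<longlongrightarrow> r * norm v + 0) (at_right 0)"
    by (intro tendsto_add tendsto_const t)
  ultimately show ?thesis
    using tendsto_le[OF trivial_limit_at_right_real _ tendsto_const] by fastforce
qed



lemma chain_unif:
  fixes g :: "'a::{real_vector,topological_space} \<Rightarrow> 'b::real_normed_vector"
  assumes gd: "gateaux_deriv g x Lg"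
    and lip: "\<forall>\<phi>\<in>C. lipschitz_on r (ball (g x) \<delta>) \<phi>" and d0: "\<delta> > 0" and r0: "r \<ge> 0"
    and eq: "equi_gateaux C (g x)" and e0: "\<epsilon> > 0"
  shows "\<forall>\<^sub>F t in at_right 0. \<forall>\<phi>\<in>C.
     \<bar>(\<phi> (g (x + t *\<^sub>R v)) - \<phi> (g x) - t * gderiv \<phi> (g x) (Lg v)) / t\<bar> \<le> \<epsilon>"
proof -
  define y where "y = g x"
  define w where "w = Lg v"
  define e where "e = (\<lambda>t. norm ((g (x + t *\<^sub>R v) - g x - t *\<^sub>R Lg v) /\<^sub>R t))"
  define \<eta> where "\<eta> = min 1 (\<epsilon> / (2 * (r + 1)))"
  have eta0: "\<eta> > 0" unfolding \<eta>_def using e0 r0 by simp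
  have "(e \<longlongrightarrow> 0) (at_right 0)" using gd unfolding gateaux_deriv_def e_def by auto
  then have E1: "\<forall>\<^sub>F t in at_right 0. e t < \<eta>" using eta0 by (rule order_tendstoD(2))
  have E2: "\<forall>\<^sub>F t in at_right 0. \<forall>\<phi>\<in>C.
        \<bar>(\<phi> (y + t *\<^sub>R w) - \<phi> y - t * gderiv \<phi> y w) / t\<bar> \<le> \<epsilon> / 2"
  proof -
    have "\<forall>v. \<forall>\<epsilon>>0. \<forall>\<^sub>F t in at_right 0. \<forall>\<phi>\<in>C.
        \<bar>(\<phi> (y + t *\<^sub>R v) - \<phi> y - t * gderiv \<phi> y v) / t\<bar> \<le> \<epsilon>"
      using eq unfolding equi_gateaux_def y_def by blast
    then show ?thesis using e0 by (meson half_gt_zero)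
  qed
  have E3: "\<forall>\<^sub>F t in at_right 0. t > 0 \<and> t * (norm w + 2) < \<delta>"
    unfolding eventually_at_right_field
  proof (intro exI[of _ "\<delta> / (norm w + 2)"] conjI allI impI)
    show "0 < \<delta> / (norm w + 2)" using d0 norm_ge_zero[of w] by (intro divide_pos_pos) linarith+
    fix t :: real assume "0 < t" "t < \<delta> / (norm w + 2)"
    then show "t > 0" "t * (norm w + 2) < \<delta>"
      using norm_ge_zero[of w] by (simp_all add: pos_less_divide_eq add_nonneg_pos)
  qed
  show ?thesis
    using E1 E2 E3
  proof eventually_elim
    case (elim t)
    then have t0: "t > 0" and tb: "t * (norm w + 2) < \<delta>" by auto
    define D where "D = g (x + t *\<^sub>R v) - y - t *\<^sub>R w"
    have nD: "norm D = t * e t"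
      unfolding D_def e_def y_def w_def using t0 by simp
    have et: "e t < 1" "e t < \<epsilon> / (2 * (r + 1))" using elim unfolding \<eta>_def by auto
    have e0': "e t \<ge> 0" unfolding e_def by simp
    have "norm (t *\<^sub>R w) = t * norm w" using t0 by simp
    also have "\<dots> < \<delta>" using tb t0 by (smt (verit) mult_left_mono norm_ge_zero)
    finally have b1: "y + t *\<^sub>R w \<in> ball y \<delta>" by (simp add: dist_norm)
    have "g (x + t *\<^sub>R v) = (y + t *\<^sub>R w) + D" unfolding D_def by simp
    have "norm (t *\<^sub>R w + D) \<le> t * norm w + t * e t"
      using norm_triangle_ineq[of "t *\<^sub>R w" D] nD t0 by simp
    also have "\<dots> \<le> t * (norm w + 2)" using et t0 by (simp add: distrib_left)
    finally have "norm (t *\<^sub>R w + D) < \<delta>" using tb by linarith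
    then have b2: "g (x + t *\<^sub>R v) \<in> ball y \<delta>"
      unfolding D_def by (simp add: dist_norm norm_minus_commute)
    show ?case
    proof
      fix \<phi> assume "\<phi> \<in> C"
      let ?L = "gderiv \<phi> y w"
      have "dist (\<phi> (g (x + t *\<^sub>R v))) (\<phi> (y + t *\<^sub>R w)) \<le> r * dist (g (x + t *\<^sub>R v)) (y + t *\<^sub>R w)"
        using lip \<open>\<phi> \<in> C\<close> b1 b2 unfolding lipschitz_on_def y_def by blast
      then have A: "\<bar>\<phi> (g (x + t *\<^sub>R v)) - \<phi> (y + t *\<^sub>R w)\<bar> \<le> r * (t * e t)"
        by (simp add: dist_real_def dist_norm D_def nD[symmetric] diff_diff_eq)
      have "r * (t * e t) \<le> t * (\<epsilon> / 2)"
      proof -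
        have "r * e t \<le> (r + 1) * (\<epsilon> / (2 * (r + 1)))"
          using et(2) e0' r0 by (intro mult_mono) auto
        also have "\<dots> = \<epsilon> / 2" using r0 by (simp add: field_simps)
        finally show ?thesis using t0 by (simp add: mult.left_commute mult_left_mono)
      qed
      with A have A': "\<bar>\<phi> (g (x + t *\<^sub>R v)) - \<phi> (y + t *\<^sub>R w)\<bar> \<le> t * (\<epsilon> / 2)" by linarith
      have "\<bar>(\<phi> (y + t *\<^sub>R w) - \<phi> y - t * ?L) / t\<bar> \<le> \<epsilon> / 2" using elim \<open>\<phi> \<in> C\<close> by auto
      then have B: "\<bar>\<phi> (y + t *\<^sub>R w) - \<phi> y - t * ?L\<bar> \<le> t * (\<epsilon> / 2)"
        using t0 by (simp add: abs_divide pos_divide_le_eq mult.commute)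
      have "\<bar>\<phi> (g (x + t *\<^sub>R v)) - \<phi> y - t * ?L\<bar> \<le> t * \<epsilon>" using A' B by linarith
      then show "\<bar>(\<phi> (g (x + t *\<^sub>R v)) - \<phi> (g x) - t * gderiv \<phi> (g x) (Lg v)) / t\<bar> \<le> \<epsilon>"
        using t0 unfolding y_def w_def by (simp add: abs_divide pos_divide_le_eq mult.commute)
    qed
  qed
qed


theorem lemma4p7:
  fixes \<Omega> :: "'a::{real_vector,t2_space} set"
    and g :: "'a \<Rightarrow> 'b::real_normed_vector"
    and C :: "('b \<Rightarrow> real) set"
    and xh :: 'a and r :: real
  assumes "hlctvs TYPE('a)"
    and "open \<Omega>" and "xh \<in> \<Omega>"
    and "gateaux_differentiable g xh"
    and "continuous (at xh within \<Omega>) g"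
    and "r \<ge> 0" and "equi_lipschitz_at r C (g xh)"
    and "equi_gateaux C (g xh)"
  shows "compactin weak_star
           (wstar_closed_conv {f. \<exists>\<phi>\<in>C. blinfun_apply f = gderiv \<phi> (g xh)}) \<and>
         equi_gateaux ((\<lambda>\<phi>. \<phi> \<circ> g) ` C) xh \<and>
         (\<forall>\<phi>\<in>C. gderiv (\<phi> \<circ> g) xh = gderiv \<phi> (g xh) \<circ> gderiv g xh)"
proof -
  note r0 = \<open>r \<ge> 0\<close> and eq = \<open>equi_gateaux C (g xh)\<close>
  obtain \<delta> where d0: "\<delta> > 0" and lip: "\<forall>\<phi>\<in>C. lipschitz_on r (ball (g xh) \<delta>) \<phi>"
    using \<open>equi_lipschitz_at r C (g xh)\<close> unfolding equi_lipschitz_at_def by blast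
  define Lg where "Lg = gderiv g xh"
  have gd: "gateaux_deriv g xh Lg" unfolding Lg_def by (rule gderiv_ok) fact
  have phid: "gateaux_deriv \<phi> (g xh) (gderiv \<phi> (g xh))" if "\<phi> \<in> C" for \<phi>
    using eq that unfolding equi_gateaux_def by (blast intro: gderiv_ok)
  have U: "\<forall>\<^sub>F t in at_right 0. \<forall>\<phi>\<in>C.
     \<bar>(\<phi> (g (xh + t *\<^sub>R v)) - \<phi> (g xh) - t * gderiv \<phi> (g xh) (Lg v)) / t\<bar> \<le> \<epsilon>"
    if "\<epsilon> > 0" for v \<epsilon>
    by (rule chain_unif[OF gd lip d0 r0 eq that])
  have comp: "gateaux_deriv (\<phi> \<circ> g) xh (gderiv \<phi> (g xh) \<circ> Lg)" if phiC: "\<phi> \<in> C" for \<phi>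
    unfolding gd_real
  proof (intro conjI allI)
    have l1: "linear Lg" "continuous_on UNIV Lg" using gd unfolding gateaux_deriv_def by auto
    have l2: "linear (gderiv \<phi> (g xh))" "continuous_on UNIV (gderiv \<phi> (g xh))"
      using phid[OF that] unfolding gateaux_deriv_def by auto
    show "linear (gderiv \<phi> (g xh) \<circ> Lg)" by (rule linear_compose[OF l1(1) l2(1)])
    show "continuous_on UNIV (gderiv \<phi> (g xh) \<circ> Lg)"
      by (rule continuous_on_compose[OF l1(2)]) (use l2 in \<open>auto intro: continuous_on_subset\<close>)
    fix v
    show "((\<lambda>t. \<bar>((\<phi> \<circ> g) (xh + t *\<^sub>R v) - (\<phi> \<circ> g) xh - t * (gderiv \<phi> (g xh) \<circ> Lg) v) / t\<bar>) \<longlongrightarrow> 0) (at_right 0)"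
    proof (rule tendstoI)
      fix \<epsilon> :: real assume "\<epsilon> > 0"
      then have "\<epsilon>/2 > 0" by simp
      from U[OF this, of v] have "\<forall>\<^sub>F t in at_right 0. \<bar>((\<phi> \<circ> g) (xh + t *\<^sub>R v) - (\<phi> \<circ> g) xh - t * (gderiv \<phi> (g xh) \<circ> Lg) v) / t\<bar> \<le> \<epsilon>/2"
        by eventually_elim (use phiC in auto)
      then show "\<forall>\<^sub>F t in at_right 0. dist \<bar>((\<phi> \<circ> g) (xh + t *\<^sub>R v) - (\<phi> \<circ> g) xh - t * (gderiv \<phi> (g xh) \<circ> Lg) v) / t\<bar> 0 < \<epsilon>"
        by eventually_elim (unfold dist_real_def diff_zero abs_abs, use \<open>\<epsilon> > 0\<close> in linarith)
    qed
  qed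
  have G: "gderiv (\<phi> \<circ> g) xh = gderiv \<phi> (g xh) \<circ> Lg" if "\<phi> \<in> C" for \<phi>
    using comp[OF that] by (rule gderiv_eq)
  have part2: "equi_gateaux ((\<lambda>\<phi>. \<phi> \<circ> g) ` C) xh"
    unfolding equi_gateaux_def
  proof (intro conjI allI impI)
    show "\<forall>\<psi>\<in>(\<lambda>\<phi>. \<phi> \<circ> g) ` C. gateaux_differentiable \<psi> xh"
      using comp unfolding gateaux_differentiable_def by blast
    fix v and \<epsilon> :: real assume "\<epsilon> > 0"
    from U[OF this, of v]
    show "\<forall>\<^sub>F t in at_right 0. \<forall>\<psi>\<in>(\<lambda>\<phi>. \<phi> \<circ> g) ` C.
        \<bar>(\<psi> (xh + t *\<^sub>R v) - \<psi> xh - t * gderiv \<psi> xh v) / t\<bar> \<le> \<epsilon>"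
      by eventually_elim (auto simp: G)
  qed
  define K where "K = {f::'b \<Rightarrow>\<^sub>L real. \<forall>y. \<bar>f y\<bar> \<le> r * norm y}"
  have SK: "{f. \<exists>\<phi>\<in>C. blinfun_apply f = gderiv \<phi> (g xh)} \<subseteq> K"
  proof
    fix f assume "f \<in> {f. \<exists>\<phi>\<in>C. blinfun_apply f = gderiv \<phi> (g xh)}"
    then obtain \<phi> where pC: "\<phi> \<in> C" and fe: "blinfun_apply f = gderiv \<phi> (g xh)" by blast
    have "\<bar>f y\<bar> \<le> r * norm y" for y
      using deriv_bound[OF bspec[OF lip pC] d0 phid[OF pC]] fe by simp
    then show "f \<in> K" unfolding K_def by blast
  qed
  have cK: "convex K" unfolding K_def convex_def
  proof (intro allI impI ballI, safe)
    fix f h :: "'b \<Rightarrow>\<^sub>L real" and u v :: real and y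
    assume f: "\<forall>y. \<bar>f y\<bar> \<le> r * norm y" and h: "\<forall>y. \<bar>h y\<bar> \<le> r * norm y"
      and u: "0 \<le> u" and v: "0 \<le> v" and uv: "u + v = 1"
    have "\<bar>u * f y + v * h y\<bar> \<le> u * \<bar>f y\<bar> + v * \<bar>h y\<bar>"
      using u v by (simp add: abs_triangle_ineq[THEN order_trans] abs_mult)
    also have "\<dots> \<le> u * (r * norm y) + v * (r * norm y)"
      using f h u v by (intro add_mono mult_left_mono) auto
    also have "\<dots> = r * norm y" unfolding distrib_right[symmetric] uv by simp
    finally show "\<bar>(u *\<^sub>R f + v *\<^sub>R h) y\<bar> \<le> r * norm y"
      by (simp add: blinfun.add_left blinfun.scaleR_left)
  qed
  have "convex hull {f. \<exists>\<phi>\<in>C. blinfun_apply f = gderiv \<phi> (g xh)} \<subseteq> K"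
    using SK cK by (rule hull_minimal)
  then have "wstar_closed_conv {f. \<exists>\<phi>\<in>C. blinfun_apply f = gderiv \<phi> (g xh)} \<subseteq> K"
    unfolding wstar_closed_conv_def K_def by (rule closure_of_minimal[OF _ ball_closed])
  then have part1: "compactin weak_star (wstar_closed_conv {f. \<exists>\<phi>\<in>C. blinfun_apply f = gderiv \<phi> (g xh)})"
    using closed_compactin[OF ball_compact[OF r0]] closedin_closure_of unfolding K_def wstar_closed_conv_def
    by blast
  have part3: "\<forall>\<phi>\<in>C. gderiv (\<phi> \<circ> g) xh = gderiv \<phi> (g xh) \<circ> gderiv g xh"
    using G unfolding Lg_def by blast
  show ?thesis using part1 part2 part3 by (intro conjI)
qed

end
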